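(* Let $a>b\ge 1$ be integers, $n=a+b$, and let $\breve{K}_{a,b}$ be the Mycielskian of the complete bipartite graph $K_{a,b}$. Then $$E_{\chi^+}(\breve{K}_{a,b})=2+\frac{2a-1}{2a+2b+1},\qquad V_{\chi^+}(\breve{K}_{a,b})=\frac{16a^2+4b^2+8a^2b+8b^2a+24ab+8a+2b}{(2n+1)^3}.$$
   Context: Mycielskian: for a graph $G$ with vertex set $\{v_1,\dots,v_m\}$, its Mycielskian $\breve{G}$ is the graph with vertex set $\{v_1,\dots,v_m\}\cup\{u_1,\dots,u_m\}\cup\{u\}$ (all new, distinct vertices) whose edges are: all edges of $G$; the edge $u_iv_j$ whenever $v_iv_j$ is an edge of $G$; and the edges $uu_i$ for all $i$. Colouring parameters: for a proper colouring $\mathcal{C}=\{c_1,\dots,c_k\}$ of $G$ with colours indexed $1,\dots,k$, let $\theta(c_i)$ be the number of vertices of colour $c_i$ and $f(i)=\theta(c_i)/|V(G)|$. The colouring mean is $\mu_{\mathcal{C}}=\sum_i i\,f(i)$, the colouring variance is $\sum_i (i-\mu_{\mathcal{C}})^2 f(i)$, and the colouring sum is $\sum_i i\,\theta(c_i)$. The $\chi^+$-chromatic mean $E_{\chi^+}(G)$ (resp. $\chi^+$-chromatic variance $V_{\chi^+}(G)$) is the colouring mean (resp. variance) of a proper colouring of $G$ with exactly $\chi(G)$ colours $c_1,\dots,c_{\chi(G)}$ whose colouring sum is maximum among all such colourings. *)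

theory Defs
  imports Complex_Main
begin

text \<open>Simple graphs: a vertex set V and a symmetric irreflexive adjacency relation E
  (only edges between vertices of V matter).\<close>

datatype 'v myc_vertex = Orig 'v | Copy 'v | Apex

definition myc_verts :: "'v set \<Rightarrow> 'v myc_vertex set" where
  "myc_verts V = Orig ` V \<union> Copy ` V \<union> {Apex}"

fun myc_adj :: "('v \<Rightarrow> 'v \<Rightarrow> bool) \<Rightarrow> 'v myc_vertex \<Rightarrow> 'v myc_vertex \<Rightarrow> bool" where
  "myc_adj E (Orig x) (Orig y) = E x y"
| "myc_adj E (Copy x) (Orig y) = E x y"
| "myc_adj E (Orig x) (Copy y) = E x y"
| "myc_adj E Apex (Copy y) = True"
| "myc_adj E (Copy x) Apex = True"
| "myc_adj E _ _ = False"

definition Kab_verts :: "nat \<Rightarrow> nat \<Rightarrow> nat set" where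
  "Kab_verts a b = {0..<a+b}"

definition Kab_adj :: "nat \<Rightarrow> nat \<Rightarrow> nat \<Rightarrow> nat \<Rightarrow> bool" where
  "Kab_adj a b x y = ((x < a \<and> a \<le> y \<and> y < a + b) \<or> (y < a \<and> a \<le> x \<and> x < a + b))"

definition proper_colouring :: "'v set \<Rightarrow> ('v \<Rightarrow> 'v \<Rightarrow> bool) \<Rightarrow> nat \<Rightarrow> ('v \<Rightarrow> nat) \<Rightarrow> bool" where
  "proper_colouring V E k c \<longleftrightarrow>
     (\<forall>v\<in>V. c v \<in> {1..k}) \<and> (\<forall>x\<in>V. \<forall>y\<in>V. E x y \<longrightarrow> c x \<noteq> c y)"

definition chromatic_number :: "'v set \<Rightarrow> ('v \<Rightarrow> 'v \<Rightarrow> bool) \<Rightarrow> nat" where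
  "chromatic_number V E = (LEAST k. \<exists>c. proper_colouring V E k c)"

definition theta :: "'v set \<Rightarrow> ('v \<Rightarrow> nat) \<Rightarrow> nat \<Rightarrow> nat" where
  "theta V c i = card {v\<in>V. c v = i}"

definition colouring_sum :: "'v set \<Rightarrow> nat \<Rightarrow> ('v \<Rightarrow> nat) \<Rightarrow> nat" where
  "colouring_sum V k c = (\<Sum>i=1..k. i * theta V c i)"

definition colouring_mean :: "'v set \<Rightarrow> nat \<Rightarrow> ('v \<Rightarrow> nat) \<Rightarrow> real" where
  "colouring_mean V k c = (\<Sum>i=1..k. real i * (real (theta V c i) / real (card V)))"

definition colouring_variance :: "'v set \<Rightarrow> nat \<Rightarrow> ('v \<Rightarrow> nat) \<Rightarrow> real" where
  "colouring_variance V k c =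
     (\<Sum>i=1..k. (real i - colouring_mean V k c)^2 * (real (theta V c i) / real (card V)))"

definition chi_plus_colouring :: "'v set \<Rightarrow> ('v \<Rightarrow> 'v \<Rightarrow> bool) \<Rightarrow> ('v \<Rightarrow> nat) \<Rightarrow> bool" where
  "chi_plus_colouring V E c \<longleftrightarrow>
     (let k = chromatic_number V E in
       proper_colouring V E k c \<and>
       (\<forall>c'. proper_colouring V E k c' \<longrightarrow> colouring_sum V k c' \<le> colouring_sum V k c))"

definition E_chi_plus :: "'v set \<Rightarrow> ('v \<Rightarrow> 'v \<Rightarrow> bool) \<Rightarrow> real" where
  "E_chi_plus V E = colouring_mean V (chromatic_number V E) (SOME c. chi_plus_colouring V E c)"

definition V_chi_plus :: "'v set \<Rightarrow> ('v \<Rightarrow> 'v \<Rightarrow> bool) \<Rightarrow> real" where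
  "V_chi_plus V E = colouring_variance V (chromatic_number V E) (SOME c. chi_plus_colouring V E c)"

end

theory Submission
  imports Defs
begin

lemma sum_myc:
  assumes "finite V"
  shows "sum f (myc_verts V) = (\<Sum>x\<in>V. f (Orig x)) + (\<Sum>x\<in>V. f (Copy x)) + f Apex"
proof -
  have d1: "(Orig ` V) \<inter> (Copy ` V) = {}" by auto
  have d2: "(Orig ` V \<union> Copy ` V) \<inter> {Apex} = {}" by auto
  have "sum f (myc_verts V) = sum f (Orig ` V \<union> Copy ` V) + sum f {Apex}"
    unfolding myc_verts_def using assms d2 by (intro sum.union_disjoint) auto
  also have "sum f (Orig ` V \<union> Copy ` V) = sum f (Orig ` V) + sum f (Copy ` V)"
    using assms d1 by (intro sum.union_disjoint) auto
  also have "sum f (Orig ` V) = (\<Sum>x\<in>V. f (Orig x))"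
    by (subst sum.reindex) (auto simp: inj_on_def)
  also have "sum f (Copy ` V) = (\<Sum>x\<in>V. f (Copy x))"
    by (subst sum.reindex) (auto simp: inj_on_def)
  finally show ?thesis by simp
qed

lemma sum_G:
  fixes f :: "nat myc_vertex \<Rightarrow> 'b::comm_monoid_add"
  shows "sum f (myc_verts (Kab_verts a b)) =
     (\<Sum>x\<in>{0..<a}. f (Orig x)) + (\<Sum>x\<in>{a..<a+b}. f (Orig x))
   + (\<Sum>x\<in>{0..<a}. f (Copy x)) + (\<Sum>x\<in>{a..<a+b}. f (Copy x)) + f Apex"
proof -
  have s: "\<And>g::nat\<Rightarrow>'b::comm_monoid_add. sum g {0..<a+b} = sum g {0..<a} + sum g {a..<a+b}"
    by (simp add: sum.atLeastLessThan_concat)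
  show ?thesis unfolding Kab_verts_def
    by (simp add: sum_myc s add.assoc add.left_commute)
qed

lemma card_G: "card (myc_verts (Kab_verts a b)) = 2*a + 2*b + 1"
  using sum_G[of "\<lambda>_. (1::nat)" a b] by simp

lemma theta_sum: "finite V \<Longrightarrow> theta V c i = (\<Sum>v\<in>V. if c v = i then 1 else 0)"
  unfolding theta_def by (simp add: sum.If_cases Int_def)

lemma mem_G:
  "Orig x \<in> myc_verts (Kab_verts a b) \<longleftrightarrow> x < a + b"
  "Copy x \<in> myc_verts (Kab_verts a b) \<longleftrightarrow> x < a + b"
  "Apex \<in> myc_verts (Kab_verts a b)"
  by (auto simp: myc_verts_def Kab_verts_def)

lemma proper_G:
  assumes "proper_colouring (myc_verts (Kab_verts a b)) (myc_adj (Kab_adj a b)) k c"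
  shows "\<And>v. v \<in> myc_verts (Kab_verts a b) \<Longrightarrow> 1 \<le> c v \<and> c v \<le> k"
    and "\<And>x y. x < a \<Longrightarrow> a \<le> y \<Longrightarrow> y < a + b \<Longrightarrow> c (Orig x) \<noteq> c (Orig y)"
    and "\<And>x y. x < a \<Longrightarrow> a \<le> y \<Longrightarrow> y < a + b \<Longrightarrow> c (Copy x) \<noteq> c (Orig y)"
    and "\<And>x y. x < a \<Longrightarrow> a \<le> y \<Longrightarrow> y < a + b \<Longrightarrow> c (Orig x) \<noteq> c (Copy y)"
    and "\<And>x. x < a + b \<Longrightarrow> c Apex \<noteq> c (Copy x)"
proof -
  note P = assms[unfolded proper_colouring_def]
  show "\<And>v. v \<in> myc_verts (Kab_verts a b) \<Longrightarrow> 1 \<le> c v \<and> c v \<le> k" using P by auto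
  show "\<And>x y. x < a \<Longrightarrow> a \<le> y \<Longrightarrow> y < a + b \<Longrightarrow> c (Orig x) \<noteq> c (Orig y)"
    using P mem_G by (metis Kab_adj_def add.commute trans_less_add2 myc_adj.simps(1))
  show "\<And>x y. x < a \<Longrightarrow> a \<le> y \<Longrightarrow> y < a + b \<Longrightarrow> c (Copy x) \<noteq> c (Orig y)"
    using P mem_G by (metis Kab_adj_def add.commute trans_less_add2 myc_adj.simps(2))
  show "\<And>x y. x < a \<Longrightarrow> a \<le> y \<Longrightarrow> y < a + b \<Longrightarrow> c (Orig x) \<noteq> c (Copy y)"
    using P mem_G by (metis Kab_adj_def add.commute trans_less_add2 myc_adj.simps(3))
  show "\<And>x. x < a + b \<Longrightarrow> c Apex \<noteq> c (Copy x)"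
    using P mem_G by (metis myc_adj.simps(4))
qed

lemma B1: "(\<And>x. x \<in> S \<Longrightarrow> (1::nat) \<le> f x) \<Longrightarrow> card S \<le> sum f S"
  using sum_bounded_below[of S 1 f] by simp
lemma B2: "(\<And>x. x \<in> S \<Longrightarrow> (2::nat) \<le> f x) \<Longrightarrow> 2 * card S \<le> sum f S"
  using sum_bounded_below[of S 2 f] by (simp add: mult.commute)
lemma B0: "(\<And>x. x \<in> S \<Longrightarrow> f x \<le> (1::nat)) \<Longrightarrow> sum f S \<le> card S"
  using sum_bounded_above[of S f 1] by simp

lemma cost_G:
  assumes P: "proper_colouring (myc_verts (Kab_verts a b)) (myc_adj (Kab_adj a b)) 3 c"
    and ab: "b < a" "1 \<le> b"
  shows "2*b+2 \<le> (\<Sum>v\<in>myc_verts (Kab_verts a b). 3 - c v)"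
proof -
  note R = proper_G[OF P]
  have rO: "\<And>x. x < a+b \<Longrightarrow> 1 \<le> c (Orig x) \<and> c (Orig x) \<le> 3"
    and rC: "\<And>x. x < a+b \<Longrightarrow> 1 \<le> c (Copy x) \<and> c (Copy x) \<le> 3"
    and rA: "1 \<le> c Apex \<and> c Apex \<le> 3" using R(1) mem_G by auto
  define SAO where "SAO = (\<Sum>x\<in>{0..<a}. 3 - c (Orig x))"
  define SBO where "SBO = (\<Sum>x\<in>{a..<a+b}. 3 - c (Orig x))"
  define SAC where "SAC = (\<Sum>x\<in>{0..<a}. 3 - c (Copy x))"
  define SBC where "SBC = (\<Sum>x\<in>{a..<a+b}. 3 - c (Copy x))"
  have tot: "(\<Sum>v\<in>myc_verts (Kab_verts a b). 3 - c v) = SAO+SBO+SAC+SBC+(3 - c Apex)"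
    unfolding SAO_def SBO_def SAC_def SBC_def by (rule sum_G)
  show ?thesis
  proof (cases "\<exists>x<a. c (Orig x) = 3")
    case True
    then obtain x0 where x0: "x0 < a" "c (Orig x0) = 3" by auto
    have hBO: "b \<le> SBO" unfolding SBO_def
      using B1[of "{a..<a+b}" "\<lambda>x. 3 - c (Orig x)"] R(2)[OF x0(1)] rO x0 by fastforce
    have hBC: "b \<le> SBC" unfolding SBC_def
      using B1[of "{a..<a+b}" "\<lambda>x. 3 - c (Copy x)"] R(4)[OF x0(1)] rC x0 by fastforce
    consider "c Apex = 1" | "c Apex = 2" | "c Apex = 3" using rA by linarith
    then show ?thesis
    proof cases
      case 1 then show ?thesis using tot hBO hBC by simp
    next
      case 2
      have "\<And>y. y \<in> {a..<a+b} \<Longrightarrow> 2 \<le> 3 - c (Copy y)"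
      proof -
        fix y assume y: "y \<in> {a..<a+b}"
        then have "c (Copy y) \<noteq> 3" "c (Copy y) \<noteq> 2" "c (Copy y) \<le> 3"
          using R(4)[OF x0(1)] R(5) rC x0 2 by fastforce+
        then show "2 \<le> 3 - c (Copy y)" by linarith
      qed
      then have "2*b \<le> SBC" unfolding SBC_def using B2[of "{a..<a+b}"] by fastforce
      then show ?thesis using tot hBO 2 ab by simp
    next
      case 3
      have "\<And>x. x \<in> {0..<a} \<Longrightarrow> 1 \<le> 3 - c (Copy x)"
      proof -
        fix x assume x: "x \<in> {0..<a}"
        then have "c (Copy x) \<noteq> 3" "c (Copy x) \<le> 3" using R(5)[of x] rC[of x] 3 by auto
        then show "1 \<le> 3 - c (Copy x)" by linarith
      qed
      then have "a \<le> SAC" unfolding SAC_def using B1[of "{0..<a}" "\<lambda>x. 3 - c (Copy x)"] by simp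
      then show ?thesis using tot hBO hBC ab by simp
    qed
  next
    case False
    have "\<And>x. x \<in> {0..<a} \<Longrightarrow> 1 \<le> 3 - c (Orig x)"
    proof -
      fix x assume x: "x \<in> {0..<a}"
      then have "c (Orig x) \<noteq> 3" "c (Orig x) \<le> 3" using False rO[of x] by auto
      then show "1 \<le> 3 - c (Orig x)" by linarith
    qed
    then have hAO: "a \<le> SAO" unfolding SAO_def using B1[of "{0..<a}" "\<lambda>x. 3 - c (Orig x)"] by simp
    show ?thesis
    proof (cases "\<exists>y. a \<le> y \<and> y < a+b \<and> c (Orig y) = 3")
      case True
      then obtain y0 where y0: "a \<le> y0" "y0 < a+b" "c (Orig y0) = 3" by auto
      have "\<And>x. x \<in> {0..<a} \<Longrightarrow> 1 \<le> 3 - c (Copy x)"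
      proof -
        fix x assume x: "x \<in> {0..<a}"
        then have "c (Copy x) \<noteq> 3" "c (Copy x) \<le> 3" using R(3)[OF _ y0(1,2), of x] y0 rC[of x] by auto
        then show "1 \<le> 3 - c (Copy x)" by linarith
      qed
      then have "a \<le> SAC" unfolding SAC_def using B1[of "{0..<a}" "\<lambda>x. 3 - c (Copy x)"] by simp
      then show ?thesis using tot hAO ab by simp
    next
      case False
      have "\<And>x. x \<in> {a..<a+b} \<Longrightarrow> 1 \<le> 3 - c (Orig x)"
      proof -
        fix x assume x: "x \<in> {a..<a+b}"
        then have "c (Orig x) \<noteq> 3" "c (Orig x) \<le> 3" using False rO[of x] by auto
        then show "1 \<le> 3 - c (Orig x)" by linarith
      qed
      then have hBO: "b \<le> SBO" unfolding SBO_def using B1[of "{a..<a+b}" "\<lambda>x. 3 - c (Orig x)"] by simp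
      have "3 - c (Copy a) \<le> SBC" unfolding SBC_def
        by (rule member_le_sum) (use ab in auto)
      moreover have "c Apex \<noteq> c (Copy a)" using R(5) ab by simp
      moreover have "c (Copy a) \<le> 3" using rC ab by simp
      ultimately have "1 \<le> SBC + (3 - c Apex)" using rA by linarith
      then show ?thesis using tot hAO hBO ab by simp
    qed
  qed
qed

lemma indep_G:
  assumes P: "proper_colouring (myc_verts (Kab_verts a b)) (myc_adj (Kab_adj a b)) 3 c"
    and ab: "b < a" "1 \<le> b"
  shows "(\<Sum>v\<in>myc_verts (Kab_verts a b). if c v = 3 then 1 else 0) \<le> 2*a"
proof -
  note R = proper_G[OF P]
  let ?t = "\<lambda>v. if c v = 3 then 1 else (0::nat)"
  define SAO where "SAO = (\<Sum>x\<in>{0..<a}. ?t (Orig x))"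
  define SBO where "SBO = (\<Sum>x\<in>{a..<a+b}. ?t (Orig x))"
  define SAC where "SAC = (\<Sum>x\<in>{0..<a}. ?t (Copy x))"
  define SBC where "SBC = (\<Sum>x\<in>{a..<a+b}. ?t (Copy x))"
  have tot: "(\<Sum>v\<in>myc_verts (Kab_verts a b). ?t v) = SAO+SBO+SAC+SBC+?t Apex"
    unfolding SAO_def SBO_def SAC_def SBC_def by (rule sum_G)
  have uAO: "SAO \<le> a" unfolding SAO_def using B0[of "{0..<a}" "\<lambda>x. ?t (Orig x)"] by fastforce
  have uAC: "SAC \<le> a" unfolding SAC_def using B0[of "{0..<a}" "\<lambda>x. ?t (Copy x)"] by fastforce
  have uBO: "SBO \<le> b" unfolding SBO_def using B0[of "{a..<a+b}" "\<lambda>x. ?t (Orig x)"] by fastforce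
  have uBC: "SBC \<le> b" unfolding SBC_def using B0[of "{a..<a+b}" "\<lambda>x. ?t (Copy x)"] by fastforce
  have ut: "?t Apex \<le> 1" by simp
  have zAO: "SAO = 0" if "\<forall>x<a. c (Orig x) \<noteq> 3" unfolding SAO_def using that by simp
  have zAC: "SAC = 0" if "\<forall>x<a. c (Copy x) \<noteq> 3" unfolding SAC_def using that by simp
  have zBO: "SBO = 0" if "\<forall>x. a \<le> x \<and> x < a+b \<longrightarrow> c (Orig x) \<noteq> 3" unfolding SBO_def using that by simp
  have zBC: "SBC = 0" if "\<forall>x. a \<le> x \<and> x < a+b \<longrightarrow> c (Copy x) \<noteq> 3" unfolding SBC_def using that by simp
  show ?thesis
  proof (cases "c Apex = 3")
    case True
    have "SAC = 0" using zAC R(5) True by fastforce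
    moreover have "SBC = 0" using zBC R(5) True by fastforce
    moreover have "SAO = 0 \<or> SBO = 0"
      using zAO zBO R(2) by metis
    ultimately show ?thesis using tot uAO uBO ab by auto
  next
    case False
    show ?thesis
    proof (cases "\<exists>y. a \<le> y \<and> y < a+b \<and> c (Orig y) = 3")
      case True
      then obtain y0 where y0: "a \<le> y0" "y0 < a+b" "c (Orig y0) = 3" by auto
      have "SAO = 0" using zAO R(2)[OF _ y0(1,2)] y0 by fastforce
      moreover have "SAC = 0" using zAC R(3)[OF _ y0(1,2)] y0 by fastforce
      ultimately show ?thesis using tot uBO uBC False ab by auto
    next
      case F2: False
      have "SBO = 0" using zBO F2 by auto
      moreover have "SAO = 0 \<or> SBC = 0" using zAO zBC R(4) by metis
      ultimately show ?thesis using tot uAO uAC uBC False ab by auto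
    qed
  qed
qed

lemma cycle_G:
  assumes P: "proper_colouring (myc_verts (Kab_verts a b)) (myc_adj (Kab_adj a b)) k c"
    and ab: "b < a" "1 \<le> b"
  shows "3 \<le> k" and "k = 3 \<Longrightarrow> \<exists>v\<in>myc_verts (Kab_verts a b). c v = 1"
proof -
  note R = proper_G[OF P]
  have m: "Apex \<in> myc_verts (Kab_verts a b)" "Copy 0 \<in> myc_verts (Kab_verts a b)"
    "Orig a \<in> myc_verts (Kab_verts a b)" "Orig 0 \<in> myc_verts (Kab_verts a b)"
    "Copy a \<in> myc_verts (Kab_verts a b)" using mem_G ab by auto
  have r: "1 \<le> c Apex \<and> c Apex \<le> k" "1 \<le> c (Copy 0) \<and> c (Copy 0) \<le> k"
    "1 \<le> c (Orig a) \<and> c (Orig a) \<le> k" "1 \<le> c (Orig 0) \<and> c (Orig 0) \<le> k"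
    "1 \<le> c (Copy a) \<and> c (Copy a) \<le> k" using R(1) m by blast+
  have d: "c Apex \<noteq> c (Copy 0)" "c (Copy 0) \<noteq> c (Orig a)" "c (Orig a) \<noteq> c (Orig 0)"
    "c (Orig 0) \<noteq> c (Copy a)" "c (Copy a) \<noteq> c Apex"
    using R(2)[of 0 a] R(3)[of 0 a] R(4)[of 0 a] R(5)[of 0] R(5)[of a] ab by auto
  show "3 \<le> k"
  proof (rule ccontr)
    assume "\<not> 3 \<le> k"
    then have "c Apex = 1 \<or> c Apex = 2" "c (Copy 0) = 1 \<or> c (Copy 0) = 2"
      "c (Orig a) = 1 \<or> c (Orig a) = 2" "c (Orig 0) = 1 \<or> c (Orig 0) = 2"
      "c (Copy a) = 1 \<or> c (Copy a) = 2" using r by linarith+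
    then show False using d by auto
  qed
  show "k = 3 \<Longrightarrow> \<exists>v\<in>myc_verts (Kab_verts a b). c v = 1"
  proof (rule ccontr)
    assume "k = 3" "\<not> (\<exists>v\<in>myc_verts (Kab_verts a b). c v = 1)"
    then have "c Apex \<noteq> 1" "c (Copy 0) \<noteq> 1" "c (Orig a) \<noteq> 1" "c (Orig 0) \<noteq> 1" "c (Copy a) \<noteq> 1"
      using m by auto
    then have "c Apex = 2 \<or> c Apex = 3" "c (Copy 0) = 2 \<or> c (Copy 0) = 3"
      "c (Orig a) = 2 \<or> c (Orig a) = 3" "c (Orig 0) = 2 \<or> c (Orig 0) = 3"
      "c (Copy a) = 2 \<or> c (Copy a) = 3" using r \<open>k = 3\<close> by linarith+
    then show False using d by auto
  qed
qed

definition c0 :: "nat \<Rightarrow> nat myc_vertex \<Rightarrow> nat" where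
  "c0 a v = (case v of Orig x \<Rightarrow> if x < a then 3 else 2 | Copy x \<Rightarrow> if x < a then 3 else 2 | Apex \<Rightarrow> 1)"

lemma c0_proper: "proper_colouring (myc_verts (Kab_verts a b)) (myc_adj (Kab_adj a b)) 3 (c0 a)"
  unfolding proper_colouring_def
  by (auto simp: myc_verts_def Kab_verts_def Kab_adj_def c0_def split: if_splits)

lemma c0_sum: "(\<Sum>v\<in>myc_verts (Kab_verts a b). c0 a v) = 6*a + 4*b + 1"
proof -
  have 1: "(\<Sum>x\<in>{0..<a}. c0 a (Orig x)) = 3*a" by (simp add: c0_def)
  have 2: "(\<Sum>x\<in>{a..<a+b}. c0 a (Orig x)) = 2*b" by (simp add: c0_def)
  have 3: "(\<Sum>x\<in>{0..<a}. c0 a (Copy x)) = 3*a" by (simp add: c0_def)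
  have 4: "(\<Sum>x\<in>{a..<a+b}. c0 a (Copy x)) = 2*b" by (simp add: c0_def)
  show ?thesis using sum_G[of "c0 a" a b] 1 2 3 4 by (simp add: c0_def)
qed

lemma chrom_G:
  assumes ab: "b < a" "1 \<le> b"
  shows "chromatic_number (myc_verts (Kab_verts a b)) (myc_adj (Kab_adj a b)) = 3"
  unfolding chromatic_number_def
  by (rule Least_equality) (use c0_proper cycle_G(1)[OF _ ab] in auto)

lemma fin_G: "finite (myc_verts (Kab_verts a b))"
  by (simp add: myc_verts_def Kab_verts_def)

lemma range_sums:
  assumes fin: "finite V" and r: "\<And>v. v \<in> V \<Longrightarrow> 1 \<le> c v \<and> c v \<le> (3::nat)"
  shows "colouring_sum V 3 c = (\<Sum>v\<in>V. c v)"
    and "(\<Sum>v\<in>V. 3 - c v) = 2 * theta V c 1 + theta V c 2"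
    and "theta V c 1 + theta V c 2 + theta V c 3 = card V"
    and "colouring_sum V 3 c = theta V c 1 + 2 * theta V c 2 + 3 * theta V c 3"
proof -
  have e: "{1..3::nat} = {1,2,3}" by auto
  let ?i = "\<lambda>j v. if c v = j then 1 else (0::nat)"
  have cs: "colouring_sum V 3 c = theta V c 1 + 2 * theta V c 2 + 3 * theta V c 3"
    unfolding colouring_sum_def e by simp
  show "colouring_sum V 3 c = theta V c 1 + 2 * theta V c 2 + 3 * theta V c 3" by (rule cs)
  have "(\<Sum>v\<in>V. c v) = (\<Sum>v\<in>V. ?i 1 v + 2 * ?i 2 v + 3 * ?i 3 v)"
  proof (rule sum.cong)
    fix v assume "v \<in> V" then have "1 \<le> c v" "c v \<le> 3" using r by auto
    then show "c v = ?i 1 v + 2 * ?i 2 v + 3 * ?i 3 v" by auto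
  qed simp
  then show "colouring_sum V 3 c = (\<Sum>v\<in>V. c v)"
    unfolding cs by (simp add: theta_sum[OF fin] sum.distrib sum_distrib_left)
  have "(\<Sum>v\<in>V. 3 - c v) = (\<Sum>v\<in>V. 2 * ?i 1 v + ?i 2 v)"
  proof (rule sum.cong)
    fix v assume "v \<in> V" then have "1 \<le> c v" "c v \<le> 3" using r by auto
    then show "3 - c v = 2 * ?i 1 v + ?i 2 v" by auto
  qed simp
  then show "(\<Sum>v\<in>V. 3 - c v) = 2 * theta V c 1 + theta V c 2"
    by (simp add: theta_sum[OF fin] sum.distrib sum_distrib_left)
  have "(\<Sum>v\<in>V. 1::nat) = (\<Sum>v\<in>V. ?i 1 v + ?i 2 v + ?i 3 v)"
  proof (rule sum.cong)
    fix v assume "v \<in> V" then have "1 \<le> c v" "c v \<le> 3" using r by auto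
    then show "1 = ?i 1 v + ?i 2 v + ?i 3 v" by auto
  qed simp
  then show "theta V c 1 + theta V c 2 + theta V c 3 = card V"
    by (simp add: theta_sum[OF fin] sum.distrib)
qed

lemma proper_range: "proper_colouring V E k c \<Longrightarrow> v \<in> V \<Longrightarrow> 1 \<le> c v \<and> c v \<le> k"
  unfolding proper_colouring_def by auto

lemma opt_thetas:
  assumes ab: "b < a" "1 \<le> b"
    and P: "proper_colouring (myc_verts (Kab_verts a b)) (myc_adj (Kab_adj a b)) 3 c"
  shows "colouring_sum (myc_verts (Kab_verts a b)) 3 c \<le> 6*a + 4*b + 1"
    and "6*a + 4*b + 1 \<le> colouring_sum (myc_verts (Kab_verts a b)) 3 c \<Longrightarrow>
         theta (myc_verts (Kab_verts a b)) c 1 = 1 \<and> theta (myc_verts (Kab_verts a b)) c 2 = 2*b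
         \<and> theta (myc_verts (Kab_verts a b)) c 3 = 2*a"
proof -
  let ?V = "myc_verts (Kab_verts a b)"
  have r: "\<And>v. v \<in> ?V \<Longrightarrow> 1 \<le> c v \<and> c v \<le> 3" using proper_range[OF P] by blast
  note S = range_sums[of ?V c, OF fin_G[of a b] r]
  have cost: "2*b+2 \<le> 2 * theta ?V c 1 + theta ?V c 2" using cost_G[OF P ab] S(2) by simp
  have tc: "theta ?V c 1 + theta ?V c 2 + theta ?V c 3 = 2*a+2*b+1" using S(3) card_G by simp
  have ind: "theta ?V c 3 \<le> 2*a" using indep_G[OF P ab] theta_sum[OF fin_G] by simp
  obtain v where v: "v \<in> ?V" "c v = 1" using cycle_G(2)[OF P ab] by auto
  have "{v'\<in>?V. c v' = 1} \<noteq> {}" using v by auto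
  moreover have "finite {v'\<in>?V. c v' = 1}" using fin_G by simp
  ultimately have "0 < card {v'\<in>?V. c v' = 1}" by (simp only: card_gt_0_iff) simp
  then have t1: "1 \<le> theta ?V c 1" unfolding theta_def by simp
  show "colouring_sum ?V 3 c \<le> 6*a + 4*b + 1" using S(4) cost tc by linarith
  show "6*a + 4*b + 1 \<le> colouring_sum ?V 3 c \<Longrightarrow>
         theta ?V c 1 = 1 \<and> theta ?V c 2 = 2*b \<and> theta ?V c 3 = 2*a"
    using S(4) cost tc ind t1 by linarith
qed

lemma var_alg:
  fixes x y N m :: real
  assumes N: "N = 2*x+2*y+1" and x: "x \<ge> 0" "y \<ge> 0" and m: "m = 2 + (2*x - 1)/N"
  shows "(1 - m)^2 * (1/N) + (2 - m)^2 * (2*y/N) + (3 - m)^2 * (2*x/N)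
     = (16 * x ^ 2 + 4 * y ^ 2 + 8 * x ^ 2 * y + 8 * y ^ 2 * x + 24 * x * y + 8 * x + 2 * y) / N^3"
proof -
  have Np: "N > 0" using N x by simp
  have m1: "1 - m = -(4*x+2*y)/N" using Np unfolding m N by (simp add: field_simps)
  have m2: "2 - m = (1-2*x)/N" using Np unfolding m N by (simp add: field_simps)
  have m3: "3 - m = (2*y+2)/N" using Np unfolding m N by (simp add: field_simps)
  have "(1 - m)^2 * (1/N) + (2 - m)^2 * (2*y/N) + (3 - m)^2 * (2*x/N)
      = ((4*x+2*y)^2 + (1-2*x)^2*(2*y) + (2*y+2)^2*(2*x)) / N^3"
    unfolding m1 m2 m3 using Np by (simp add: field_simps power2_eq_square power3_eq_cube)
  also have "(4*x+2*y)^2 + (1-2*x)^2*(2*y) + (2*y+2)^2*(2*x) = 16 * x ^ 2 + 4 * y ^ 2 + 8 * x ^ 2 * y + 8 * y ^ 2 * x + 24 * x * y + 8 * x + 2 * y"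
    by (simp add: algebra_simps power2_eq_square)
  finally show ?thesis .
qed

lemma mean_alg:
  fixes x y N :: real
  assumes N: "N = 2*x+2*y+1" and x: "x \<ge> 0" "y \<ge> 0"
  shows "1 * (1/N) + 2 * (2*y/N) + 3 * (2*x/N) = 2 + (2*x - 1)/N"
proof -
  have Np: "N > 0" using N x by simp
  have "1 * (1/N) + 2 * (2*y/N) + 3 * (2*x/N) = (1 + 4*y + 6*x)/N"
    by (simp add: add_divide_distrib)
  also have "(1 + 4*y + 6*x) = 2*N + (2*x - 1)" unfolding N by simp
  also have "(2*N + (2*x - 1))/N = 2 + (2*x - 1)/N" using Np by (simp add: add_divide_distrib)
  finally show ?thesis .
qed

theorem theorem3p3:
  fixes a b n :: nat
  assumes "a > b" and "b \<ge> 1" and "n = a + b"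
  shows "E_chi_plus (myc_verts (Kab_verts a b)) (myc_adj (Kab_adj a b))
           = 2 + (2 * real a - 1) / (2 * real a + 2 * real b + 1)
       \<and> V_chi_plus (myc_verts (Kab_verts a b)) (myc_adj (Kab_adj a b))
           = (16 * real a ^ 2 + 4 * real b ^ 2 + 8 * real a ^ 2 * real b + 8 * real b ^ 2 * real a
              + 24 * real a * real b + 8 * real a + 2 * real b) / (2 * real n + 1) ^ 3"
proof -
  let ?V = "myc_verts (Kab_verts a b)"
  let ?E = "myc_adj (Kab_adj a b)"
  have ab: "b < a" "1 \<le> b" using assms by auto
  have ch: "chromatic_number ?V ?E = 3" by (rule chrom_G[OF ab])
  have s0: "colouring_sum ?V 3 (c0 a) = 6*a + 4*b + 1"
    using range_sums(1)[OF fin_G proper_range[OF c0_proper]] c0_sum by simp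
  have "chi_plus_colouring ?V ?E (c0 a)"
    unfolding chi_plus_colouring_def Let_def ch using c0_proper opt_thetas(1)[OF ab] s0 by auto
  then have cp: "chi_plus_colouring ?V ?E (SOME c. chi_plus_colouring ?V ?E c)"
    by (rule someI[of "chi_plus_colouring ?V ?E"])
  define c where "c = (SOME c. chi_plus_colouring ?V ?E c)"
  have P: "proper_colouring ?V ?E 3 c" and mx: "colouring_sum ?V 3 (c0 a) \<le> colouring_sum ?V 3 c"
    using cp c0_proper unfolding chi_plus_colouring_def Let_def ch c_def by auto
  have th: "theta ?V c 1 = 1" "theta ?V c 2 = 2*b" "theta ?V c 3 = 2*a"
    using opt_thetas(2)[OF ab P] mx s0 by auto
  have e: "{1..3::nat} = {1,2,3}" by auto
  have N: "real (card ?V) = 2 * real a + 2 * real b + 1" using card_G by simp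
  have m0: "colouring_mean ?V 3 c = 1 * (1/real (card ?V)) + 2 * (2*real b/real (card ?V)) + 3 * (2*real a/real (card ?V))"
    unfolding colouring_mean_def e using th by simp
  have mean: "colouring_mean ?V 3 c = 2 + (2 * real a - 1) / (2 * real a + 2 * real b + 1)"
    unfolding m0 N by (rule mean_alg) auto
  have v0: "colouring_variance ?V 3 c = (1 - colouring_mean ?V 3 c)^2 * (1/real (card ?V))
     + (2 - colouring_mean ?V 3 c)^2 * (2*real b/real (card ?V)) + (3 - colouring_mean ?V 3 c)^2 * (2*real a/real (card ?V))"
    unfolding colouring_variance_def e using th by simp
  have nn: "2 * real n + 1 = 2 * real a + 2 * real b + 1" using assms(3) by simp
  have var: "colouring_variance ?V 3 c = (16 * real a ^ 2 + 4 * real b ^ 2 + 8 * real a ^ 2 * real b + 8 * real b ^ 2 * real a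
              + 24 * real a * real b + 8 * real a + 2 * real b) / (2 * real n + 1) ^ 3"
    unfolding v0 N nn by (rule var_alg) (auto simp: mean)
  show ?thesis unfolding E_chi_plus_def V_chi_plus_def ch c_def[symmetric] using mean var by simp
qed

end
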